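(* Let $\{a_n\}_{n\in\mathbb{N}}\subset\mathbb{R}$ be a sequence satisfying $$|a_{n+m}|\le|a_n+a_m|\quad\text{for all } n,m\in\mathbb{N} \text{ with } \tfrac12 n\le m\le 2n.$$ Then the limit $\lim_{n\to\infty}\frac{a_n}{n}$ exists and belongs to $\mathbb{R}$.
   Context: $\mathbb{N}=\{1,2,3,\dots\}$. *)

theory Defs
  imports "HOL-Analysis.Analysis"
begin

end

theory Submission
  imports Defs
begin

lemma mult_bound:
  fixes a :: "nat \<Rightarrow> real"
  assumes A: "\<And>n m. n \<ge> 1 \<Longrightarrow> m \<ge> 1 \<Longrightarrow> n \<le> 2 * m \<Longrightarrow> m \<le> 2 * n \<Longrightarrow>
             \<bar>a (n + m)\<bar> \<le> \<bar>a n + a m\<bar>"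
    and k: "k \<ge> 1"
  shows "j \<ge> 1 \<Longrightarrow> \<bar>a (j * k)\<bar> \<le> real j * \<bar>a k\<bar>"
proof (induction j rule: less_induct)
  case (less j)
  show ?case
  proof (cases "j = 1")
    case True then show ?thesis by simp
  next
    case False
    define p where "p = j div 2"
    define q where "q = j - p"
    have p1: "p \<ge> 1" "q \<ge> 1" "p < j" "q < j" "p \<le> 2*q" "q \<le> 2*p" "p + q = j"
      using less.prems False unfolding p_def q_def by auto
    have "\<bar>a (j*k)\<bar> = \<bar>a (p*k + q*k)\<bar>" using p1 by (metis add_mult_distrib)
    also have "\<dots> \<le> \<bar>a (p*k) + a (q*k)\<bar>"
      using A[of "p*k" "q*k"] p1 k by (simp add: mult_le_mono1 mult.assoc[symmetric])
    also have "\<dots> \<le> \<bar>a (p*k)\<bar> + \<bar>a (q*k)\<bar>" by (rule abs_triangle_ineq)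
    also have "\<dots> \<le> real p * \<bar>a k\<bar> + real q * \<bar>a k\<bar>"
      using less.IH[of p] less.IH[of q] p1 by simp
    also have "\<dots> = real j * \<bar>a k\<bar>" using p1
      by (metis of_nat_add distrib_right)
    finally show ?thesis .
  qed
qed

lemma gen_bound:
  fixes a :: "nat \<Rightarrow> real"
  assumes A: "\<And>n m. n \<ge> 1 \<Longrightarrow> m \<ge> 1 \<Longrightarrow> n \<le> 2 * m \<Longrightarrow> m \<le> 2 * n \<Longrightarrow>
             \<bar>a (n + m)\<bar> \<le> \<bar>a n + a m\<bar>"
    and k: "k \<ge> 1"
  shows "N \<ge> 1 \<Longrightarrow> \<bar>a N\<bar> \<le> (\<bar>a k\<bar> / real k) * real N + 4 * \<bar>a 1\<bar> * real k"
proof (induction N rule: less_induct)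
  case (less N)
  define G where "G = \<bar>a k\<bar> / real k"
  have G: "G \<ge> 0" unfolding G_def by simp
  have Gk: "\<And>p. p \<ge> 1 \<Longrightarrow> \<bar>a (p * k)\<bar> \<le> G * real (p * k)"
  proof -
    fix p :: nat assume "p \<ge> 1"
    then have "\<bar>a (p * k)\<bar> \<le> real p * \<bar>a k\<bar>" using mult_bound[of a k p, OF A k] by blast
    also have "\<dots> = G * real (p * k)" unfolding G_def using k by simp
    finally show "\<bar>a (p * k)\<bar> \<le> G * real (p * k)" .
  qed
  show ?case
  proof (cases "N < 4 * k")
    case True
    have "\<bar>a N\<bar> \<le> real N * \<bar>a 1\<bar>"
      using mult_bound[of a 1 N, OF A] less.prems by simp
    also have "\<dots> \<le> 4 * \<bar>a 1\<bar> * real k"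
    proof -
      have "real N \<le> 4 * real k" using True by linarith
      then have "real N * \<bar>a 1\<bar> \<le> (4 * real k) * \<bar>a 1\<bar>" by (rule mult_right_mono) simp
      then show ?thesis by (simp add: algebra_simps)
    qed
    finally have "\<bar>a N\<bar> \<le> 4 * \<bar>a 1\<bar> * real k" .
    moreover have "0 \<le> G * real N" using G by simp
    ultimately show ?thesis unfolding G_def by linarith
  next
    case False
    define j where "j = N div k"
    define p where "p = j div 2"
    define A' where "A' = p * k"
    define B where "B = N - A'"
    have "4 * k div k \<le> N div k" using False div_le_mono[of "4*k" N k] by simp
    then have j4: "j \<ge> 4" unfolding j_def using k by simp
    have Nj1: "j * k \<le> N" unfolding j_def by (rule div_times_less_eq_dividend)
    have "N = j * k + N mod k" unfolding j_def by simp
    moreover have "N mod k < k" using k by simp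
    ultimately have Nj2: "N < j * k + k" by linarith
    have jp: "2 * p \<le> j" "j \<le> 2 * p + 1" unfolding p_def by auto
    have p2: "p \<ge> 2" using j4 jp by linarith
    have AB: "A' \<ge> 1" "B \<ge> 1" "A' \<le> 2 * B" "B \<le> 2 * A'" "B < N" "A' + B = N"
    proof -
      have "A' \<ge> 2 * k" unfolding A'_def using p2 by simp
      moreover have "2 * A' \<le> j * k" unfolding A'_def using jp
        by (metis mult.assoc mult_le_mono1)
      moreover have "j * k \<le> 2 * A' + k" unfolding A'_def using mult_le_mono1[OF jp(2), of k]
        by (simp add: algebra_simps)
      ultimately show "A' \<ge> 1" "B \<ge> 1" "A' \<le> 2 * B" "B \<le> 2 * A'" "B < N" "A' + B = N"
        unfolding B_def using Nj1 Nj2 k by linarith+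
    qed
    have "\<bar>a N\<bar> \<le> \<bar>a A' + a B\<bar>" using A[of A' B] AB by simp
    also have "\<dots> \<le> \<bar>a A'\<bar> + \<bar>a B\<bar>" by (rule abs_triangle_ineq)
    finally have s1: "\<bar>a N\<bar> \<le> \<bar>a A'\<bar> + \<bar>a B\<bar>" .
    have s2: "\<bar>a A'\<bar> \<le> G * real A'"
      using Gk[of p] p2 unfolding A'_def by simp
    have s3: "\<bar>a B\<bar> \<le> G * real B + 4 * \<bar>a 1\<bar> * real k"
      using less.IH[of B] AB unfolding G_def by simp
    have "real A' + real B = real N" using AB(6) by (metis of_nat_add)
    then have "G * real A' + G * real B = G * real N" by (metis distrib_left)
    with s1 s2 s3 show ?thesis unfolding G_def by linarith
  qed
qed

theorem mainTheorem5:
  fixes a :: "nat \<Rightarrow> real"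
  assumes "\<And>n m. n \<ge> 1 \<Longrightarrow> m \<ge> 1 \<Longrightarrow> n \<le> 2 * m \<Longrightarrow> m \<le> 2 * n \<Longrightarrow>
             \<bar>a (n + m)\<bar> \<le> \<bar>a n + a m\<bar>"
  shows "\<exists>L::real. (\<lambda>n. a n / real n) \<longlonglongrightarrow> L"
proof -
  define b where "b n = \<bar>a n\<bar>" for n
  define S where "S = (\<lambda>k. b k / real k) ` {1..}"
  define l where "l = Inf S"
  have Sne: "S \<noteq> {}" unfolding S_def by auto
  have Sbdd: "bdd_below S" unfolding S_def b_def by (rule bdd_belowI[of _ 0]) auto
  have low: "l \<le> b k / real k" if "k \<ge> 1" for k
    unfolding l_def using Sbdd that by (auto intro!: cInf_lower simp: S_def)
  have l0: "l \<ge> 0" unfolding l_def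
    by (rule cInf_greatest[OF Sne]) (auto simp: S_def b_def)
  have conv: "(\<lambda>n. b n / real n) \<longlonglongrightarrow> l"
    unfolding lim_sequentially
  proof (intro allI impI)
    fix r :: real assume r: "r > 0"
    have "l < l + r / 2" using r by simp
    then obtain s where "s \<in> S" "s < l + r / 2" unfolding l_def using Sne cInf_less_iff[OF Sne Sbdd]
      by blast
    then obtain k where k: "k \<ge> 1" "b k / real k < l + r / 2" unfolding S_def by auto
    define D where "D = 4 * \<bar>a 1\<bar> * real k"
    have D0: "D \<ge> 0" unfolding D_def by simp
    obtain M :: nat where M: "real M > 2 * D / r" using reals_Archimedean2 by blast
    show "\<exists>no. \<forall>n\<ge>no. dist (b n / real n) l < r"
    proof (intro exI allI impI)
      fix n assume n: "n \<ge> M + 1"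
      have n1: "n \<ge> 1" using n by simp
      have np: "real n > 0" using n1 by simp
      have "b n \<le> (b k / real k) * real n + D"
        using gen_bound[of a k n, OF assms k(1) n1] unfolding b_def D_def by simp
      then have u: "b n / real n \<le> b k / real k + D / real n" using np
        by (simp add: field_simps)
      have "D / real n < r / 2"
      proof -
        have "real n > 2 * D / r" using M n by linarith
        then have "real n * r > 2 * D" using r by (simp add: field_simps)
        then show ?thesis using np by (simp add: field_simps)
      qed
      then have "b n / real n < l + r" using u k(2) by linarith
      moreover have "l \<le> b n / real n" using low[OF n1] .
      ultimately show "dist (b n / real n) l < r" unfolding dist_real_def by linarith
    qed
  qed
  show ?thesis
  proof (cases "l = 0")
    case True
    have "(\<lambda>n. \<bar>a n / real n\<bar>) \<longlonglongrightarrow> 0" using conv True unfolding b_def by simp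
    then have "(\<lambda>n. a n / real n) \<longlonglongrightarrow> 0" by (simp only: tendsto_rabs_zero_iff)
    then show ?thesis by blast
  next
    case False
    then have lp: "l > 0" using l0 by simp
    have "eventually (\<lambda>n. b n / real n > 3 * l / 4) sequentially"
      using conv lp by (intro order_tendstoD(1)) auto
    moreover have "eventually (\<lambda>n. b n / real n < 5 * l / 4) sequentially"
      using conv lp by (intro order_tendstoD(2)) auto
    ultimately have "eventually (\<lambda>n. b n / real n > 3 * l / 4 \<and> b n / real n < 5 * l / 4) sequentially"
      by (rule eventually_conj)
    then obtain N0 where N0: "\<And>n. n \<ge> N0 \<Longrightarrow> b n / real n > 3 * l / 4 \<and> b n / real n < 5 * l / 4"
      unfolding eventually_sequentially by blast
    define N1 where "N1 = max N0 2"
    have bnd: "b n > 3 * l / 4 * real n \<and> b n < 5 * l / 4 * real n" if "n \<ge> N1" for n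
    proof -
      have "real n > 0" using that unfolding N1_def by simp
      then show ?thesis using N0[of n] that unfolding N1_def by (simp add: field_simps)
    qed
    have nz: "a n \<noteq> 0" if "n \<ge> N1" for n
    proof -
      have "real n > 0" using that unfolding N1_def by simp
      then have "3 * l / 4 * real n > 0" using lp by simp
      then show ?thesis using bnd[OF that] unfolding b_def by auto
    qed
    have stepL: "(a n > 0) = (a (Suc n) > 0)" if n: "n \<ge> N1" for n
    proof (rule ccontr)
      assume opp: "(a n > 0) \<noteq> (a (Suc n) > 0)"
      have n2: "n \<ge> 2" using n unfolding N1_def by simp
      have "\<bar>a (n + Suc n)\<bar> \<le> \<bar>a n + a (Suc n)\<bar>" using assms[of n "Suc n"] n2 by simp
      moreover have "\<bar>a n + a (Suc n)\<bar> \<le> max (b n) (b (Suc n))"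
        using opp nz[OF n] nz[of "Suc n"] n unfolding b_def by auto
      moreover have "b (n + Suc n) > 3 * l / 4 * real (n + Suc n)" using bnd[of "n + Suc n"] n by simp
      moreover have "b n < 5 * l / 4 * real n" using bnd[OF n] by simp
      moreover have "b (Suc n) < 5 * l / 4 * real (Suc n)" using bnd[of "Suc n"] n by simp
      moreover have "l * real n \<ge> l * 2" using n2 lp by simp
      moreover have "l * real n \<le> l * real (Suc n)" using lp by simp
      ultimately show False unfolding b_def by (simp add: algebra_simps)
    qed
    have const: "(a n > 0) = (a N1 > 0)" if "n \<ge> N1" for n
      using that
    proof (induction n rule: dec_induct)
      case base then show ?case by simp
    next
      case (step m) then show ?case using stepL[of m] by simp
    qed
    show ?thesis
    proof (cases "a N1 > 0")
      case True
      have "eventually (\<lambda>n. b n / real n = a n / real n) sequentially"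
        unfolding eventually_sequentially
      proof (intro exI[of _ N1] allI impI)
        fix n assume n: "n \<ge> N1"
        then have "a n > 0" using const[of n] True by simp
        then show "b n / real n = a n / real n" unfolding b_def by simp
      qed
      then have "(\<lambda>n. a n / real n) \<longlonglongrightarrow> l" using conv by (rule Lim_transform_eventually[rotated])
      then show ?thesis by blast
    next
      case False
      have "eventually (\<lambda>n. - (b n / real n) = a n / real n) sequentially"
        unfolding eventually_sequentially
      proof (intro exI[of _ N1] allI impI)
        fix n assume n: "n \<ge> N1"
        then have "a n < 0" using const[of n] False nz[of n] by linarith
        then show "- (b n / real n) = a n / real n" unfolding b_def by simp
      qed
      moreover have "(\<lambda>n. - (b n / real n)) \<longlonglongrightarrow> - l" using conv by (rule tendsto_minus)
      ultimately have "(\<lambda>n. a n / real n) \<longlonglongrightarrow> - l" by (rule Lim_transform_eventually[rotated])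
      then show ?thesis by blast
    qed
  qed
qed

end
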